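(* Let $H$ be a graph on $h$ vertices with $\chi(H)=r\geq 3$ and $\gcd(H)=1$. For every $\alpha>0$ there exists $n_0=n_0(\alpha,H)$ such that if $G$ is a balanced $r$-partite graph on $rn$ vertices with $n\geq n_0$ and $\delta^*(G)\geq \frac{r-2}{r-1}n+\alpha n$, then for every vertex $v\in V(G)$ there is a copy of $H$ in $G$ containing $v$.
   Context: For an $r$-partite graph $G$ with vertex classes $V_1,\dots,V_r$, $G$ is balanced if all classes have the same size, and $\delta^*(G)$ is the largest integer $m$ such that for all $i\neq j$ every vertex of $V_i$ has at least $m$ neighbours in $V_j$. For a graph $H$ with $\chi(H)=r$, let $\mathcal C$ be the set of proper $r$-colourings of $H$ with colour classes $X_1^\phi,\dots,X_r^\phi$, and $\mathcal D(H)=\bigcup_{\phi\in\mathcal C}\{|X_i^\phi|-|X_j^\phi|: i,j\in[r]\}$; $\gcd(H)$ is the greatest common divisor of the elements of $\mathcal D(H)$ (and $\infty$ if $\mathcal D(H)=\{0\}$). *)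

theory Defs
  imports Complex_Main
begin

definition simple_graph :: "'a set \<Rightarrow> ('a \<Rightarrow> 'a \<Rightarrow> bool) \<Rightarrow> bool" where
  "simple_graph V E \<longleftrightarrow> finite V \<and>
     (\<forall>x y. E x y \<longrightarrow> x \<in> V \<and> y \<in> V \<and> x \<noteq> y \<and> E y x)"

definition proper_colouring :: "'a set \<Rightarrow> ('a \<Rightarrow> 'a \<Rightarrow> bool) \<Rightarrow> nat \<Rightarrow> ('a \<Rightarrow> nat) \<Rightarrow> bool" where
  "proper_colouring V E k f \<longleftrightarrow> (\<forall>v\<in>V. f v < k) \<and> (\<forall>x\<in>V. \<forall>y\<in>V. E x y \<longrightarrow> f x \<noteq> f y)"

definition chromatic_number :: "'a set \<Rightarrow> ('a \<Rightarrow> 'a \<Rightarrow> bool) \<Rightarrow> nat" where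
  "chromatic_number V E = (LEAST k. \<exists>f. proper_colouring V E k f)"

definition colour_class_diffs :: "'a set \<Rightarrow> ('a \<Rightarrow> 'a \<Rightarrow> bool) \<Rightarrow> int set" where
  "colour_class_diffs V E =
     {int (card {v\<in>V. f v = i}) - int (card {v\<in>V. f v = j}) | f i j.
        proper_colouring V E (chromatic_number V E) f \<and>
        i < chromatic_number V E \<and> j < chromatic_number V E}"

text \<open>gcd(H). The paper's value \<infinity> (when D(H) = {0}) is represented by 0 = Gcd {0};
  in any case it is different from 1.\<close>
definition graph_gcd :: "'a set \<Rightarrow> ('a \<Rightarrow> 'a \<Rightarrow> bool) \<Rightarrow> int" where
  "graph_gcd V E = Gcd (colour_class_diffs V E)"

definition balanced_r_partite :: "nat \<Rightarrow> nat \<Rightarrow> 'b set \<Rightarrow> ('b \<Rightarrow> 'b \<Rightarrow> bool) \<Rightarrow> (nat \<Rightarrow> 'b set) \<Rightarrow> bool" where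
  "balanced_r_partite r n V E P \<longleftrightarrow> simple_graph V E \<and>
     (\<forall>i<r. P i \<subseteq> V \<and> card (P i) = n) \<and>
     (\<forall>i<r. \<forall>j<r. i \<noteq> j \<longrightarrow> P i \<inter> P j = {}) \<and>
     V = (\<Union>i<r. P i) \<and>
     (\<forall>i<r. \<forall>x\<in>P i. \<forall>y\<in>P i. \<not> E x y)"

definition delta_star :: "nat \<Rightarrow> ('b \<Rightarrow> 'b \<Rightarrow> bool) \<Rightarrow> (nat \<Rightarrow> 'b set) \<Rightarrow> nat" where
  "delta_star r E P = Min {card {u\<in>P j. E v u} | i j v. i < r \<and> j < r \<and> i \<noteq> j \<and> v \<in> P i}"

definition copy_containing :: "'a set \<Rightarrow> ('a \<Rightarrow> 'a \<Rightarrow> bool) \<Rightarrow> 'b set \<Rightarrow> ('b \<Rightarrow> 'b \<Rightarrow> bool) \<Rightarrow> 'b \<Rightarrow> bool" where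
  "copy_containing VH EH VG EG v \<longleftrightarrow> (\<exists>\<phi>. inj_on \<phi> VH \<and> \<phi> ` VH \<subseteq> VG \<and>
     (\<forall>x\<in>VH. \<forall>y\<in>VH. EH x y \<longrightarrow> EG (\<phi> x) (\<phi> y)) \<and> v \<in> \<phi> ` VH)"

end

theory Submission
  imports Defs "HOL-Library.FuncSet"
begin

lemma dc: "finite A \<Longrightarrow> finite B \<Longrightarrow> (\<Sum>w\<in>A. card {u\<in>B. R u w}) = (\<Sum>u\<in>B. card {w\<in>A. R u w})"
proof -
  assume a: "finite A" "finite B"
  have "(\<Sum>w\<in>A. card {u\<in>B. R u w}) = (\<Sum>w\<in>A. \<Sum>u\<in>B. if R u w then 1 else 0)"
    using a by (simp add: sum.If_cases Int_def)
  also have "\<dots> = (\<Sum>u\<in>B. \<Sum>w\<in>A. if R u w then 1 else 0)" by (rule sum.swap)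
  also have "\<dots> = (\<Sum>u\<in>B. card {w\<in>A. R u w})"
    using a by (simp add: sum.If_cases Int_def)
  finally show ?thesis .
qed

lemma markov:
  fixes A :: "'c set" and g :: "'c \<Rightarrow> nat"
  assumes "finite A" "\<forall>w\<in>B. c \<le> g w" "B \<subseteq> A"
  shows "card B * c \<le> sum g A"
proof -
  have "card B * c = (\<Sum>w\<in>B. c)" by simp
  also have "\<dots> \<le> (\<Sum>w\<in>B. g w)" using assms by (intro sum_mono) auto
  also have "\<dots> \<le> sum g A" using assms by (intro sum_mono2) auto
  finally show ?thesis .
qed


lemma blowup:
  "\<forall>\<epsilon>::real. \<epsilon> > 0 \<longrightarrow> (\<forall>t::nat. \<exists>N::nat. \<forall>n\<ge>N. \<forall>(E::'b\<Rightarrow>'b\<Rightarrow>bool) (W::nat\<Rightarrow>'b set) (m::nat).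
     (\<forall>x y. E x y \<longrightarrow> E y x) \<and> (\<forall>j<k. finite (W j)) \<and> m \<le> n \<and>
     (\<forall>i j. i < j \<and> j < k \<longrightarrow> (\<forall>u\<in>W i. card {w\<in>W j. \<not> E u w} \<le> m)) \<and>
     (\<forall>j<k. real j * real m + \<epsilon> * real n \<le> real (card (W j)))
     \<longrightarrow> (\<exists>S. \<forall>j<k. S j \<subseteq> W j \<and> card (S j) = t \<and> (\<forall>i<j. \<forall>x\<in>S i. \<forall>y\<in>S j. E x y)))"
proof (induction k)
  case 0
  then show ?case by auto
next
  case (Suc k)
  show ?case
  proof (intro allI impI)
    fix \<epsilon> :: real and t :: nat
    assume eps: "\<epsilon> > 0"
    show "\<exists>N::nat. \<forall>n\<ge>N. \<forall>(E::'b\<Rightarrow>'b\<Rightarrow>bool) (W::nat\<Rightarrow>'b set) (m::nat).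
     (\<forall>x y. E x y \<longrightarrow> E y x) \<and> (\<forall>j<Suc k. finite (W j)) \<and> m \<le> n \<and>
     (\<forall>i j. i < j \<and> j < Suc k \<longrightarrow> (\<forall>u\<in>W i. card {w\<in>W j. \<not> E u w} \<le> m)) \<and>
     (\<forall>j<Suc k. real j * real m + \<epsilon> * real n \<le> real (card (W j)))
     \<longrightarrow> (\<exists>S. \<forall>j<Suc k. S j \<subseteq> W j \<and> card (S j) = t \<and> (\<forall>i<j. \<forall>x\<in>S i. \<forall>y\<in>S j. E x y))"
    proof (cases "t = 0")
      case True
      show ?thesis by (rule exI[of _ 0], intro allI impI, rule exI[of _ "\<lambda>_. {}"], simp add: True)
    next
      case False
      then have t1: "t \<ge> 1" by simp
      define T where "T = t + nat \<lceil>2 * real k * real t / \<epsilon>\<rceil>"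
      have Tt: "T \<ge> t" unfolding T_def by simp
      define D where "D = real (T - t + 1)"
      have Dpos: "D > 0" unfolding D_def by simp
      have TD: "real T = D + real t - 1" unfolding D_def using Tt by simp
      have key: "real k * real t \<le> \<epsilon> / 2 * D"
      proof -
        have "2 * real k * real t / \<epsilon> \<le> real (nat \<lceil>2 * real k * real t / \<epsilon>\<rceil>)"
          by linarith
        also have "\<dots> \<le> D" unfolding D_def T_def by simp
        finally have "2 * real k * real t / \<epsilon> \<le> D" .
        then have "2 * real k * real t \<le> D * \<epsilon>" using eps by (simp add: divide_le_eq)
        then show ?thesis by (simp add: field_simps)
      qed
      obtain N1 where N1: "\<forall>n\<ge>N1. \<forall>(E::'b\<Rightarrow>'b\<Rightarrow>bool) (W::nat\<Rightarrow>'b set) (m::nat).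
         (\<forall>x y. E x y \<longrightarrow> E y x) \<and> (\<forall>j<k. finite (W j)) \<and> m \<le> n \<and>
         (\<forall>i j. i < j \<and> j < k \<longrightarrow> (\<forall>u\<in>W i. card {w\<in>W j. \<not> E u w} \<le> m)) \<and>
         (\<forall>j<k. real j * real m + \<epsilon> * real n \<le> real (card (W j)))
         \<longrightarrow> (\<exists>S. \<forall>j<k. S j \<subseteq> W j \<and> card (S j) = T \<and> (\<forall>i<j. \<forall>x\<in>S i. \<forall>y\<in>S j. E x y))"
        using Suc.IH[rule_format, OF eps, of T] by (elim exE) (rule that)
      define N where "N = max N1 (nat \<lceil>2 * real t * 2^(T*k) / \<epsilon>\<rceil>)"
      show ?thesis
      proof (rule exI[of _ N], intro allI impI)
        fix n :: nat and E :: "'b\<Rightarrow>'b\<Rightarrow>bool" and W :: "nat\<Rightarrow>'b set" and m :: nat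
        assume nN: "n \<ge> N"
        assume H: "(\<forall>x y. E x y \<longrightarrow> E y x) \<and> (\<forall>j<Suc k. finite (W j)) \<and> m \<le> n \<and>
         (\<forall>i j. i < j \<and> j < Suc k \<longrightarrow> (\<forall>u\<in>W i. card {w\<in>W j. \<not> E u w} \<le> m)) \<and>
         (\<forall>j<Suc k. real j * real m + \<epsilon> * real n \<le> real (card (W j)))"
        have sym: "\<And>x y. E x y \<Longrightarrow> E y x" using H by blast
        have fin: "\<And>j. j < Suc k \<Longrightarrow> finite (W j)" using H by blast
        have mn: "m \<le> n" using H by blast
        have nonn: "\<And>i j u. i < j \<Longrightarrow> j < Suc k \<Longrightarrow> u \<in> W i \<Longrightarrow> card {w\<in>W j. \<not> E u w} \<le> m"
          using H by blast
        have sz: "\<And>j. j < Suc k \<Longrightarrow> real j * real m + \<epsilon> * real n \<le> real (card (W j))"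
          using H by blast
        obtain S0 where S0: "\<forall>j<k. S0 j \<subseteq> W j \<and> card (S0 j) = T \<and> (\<forall>i<j. \<forall>x\<in>S0 i. \<forall>y\<in>S0 j. E x y)"
        proof -
          have pre: "(\<forall>x y. E x y \<longrightarrow> E y x) \<and> (\<forall>j<k. finite (W j)) \<and> m \<le> n \<and>
             (\<forall>i j. i < j \<and> j < k \<longrightarrow> (\<forall>u\<in>W i. card {w\<in>W j. \<not> E u w} \<le> m)) \<and>
             (\<forall>j<k. real j * real m + \<epsilon> * real n \<le> real (card (W j)))"
            using sym fin mn nonn sz by (auto intro: less_SucI)
          have nN1: "n \<ge> N1" using nN unfolding N_def by simp
          show ?thesis using N1[rule_format, OF nN1 pre] that by blast
        qed
        define bad where "bad j = {w\<in>W k. card (S0 j \<inter> {u. E w u}) < t}" for j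
        define good where "good = W k - (\<Union>j<k. bad j)"
        have finK: "finite (W k)" using fin by simp
        have finS0: "\<And>j. j < k \<Longrightarrow> finite (S0 j)" using S0 fin
          by (meson finite_subset less_SucI)
        have badb: "real (card (bad j)) * D \<le> real T * real m" if j: "j < k" for j
        proof -
          have "card (bad j) * (T - t + 1) \<le> (\<Sum>w\<in>W k. card {u\<in>S0 j. \<not> E w u})"
          proof (rule markov)
            show "finite (W k)" by (rule finK)
            show "bad j \<subseteq> W k" unfolding bad_def by auto
            show "\<forall>w\<in>bad j. T - t + 1 \<le> card {u \<in> S0 j. \<not> E w u}"
            proof
              fix w assume w: "w \<in> bad j"
              have aux: "\<And>a b c::nat. c = a+b \<Longrightarrow> c = T \<Longrightarrow> a < t \<Longrightarrow> T - t + 1 \<le> b" using Tt by arith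
              have "card (S0 j) = card (S0 j \<inter> {u. E w u}) + card {u \<in> S0 j. \<not> E w u}"
                using finS0[OF j] by (subst card_Un_disjoint[symmetric]) (auto intro: arg_cong[where f=card])
              moreover have "card (S0 j) = T" using S0 j by blast
              moreover have "card (S0 j \<inter> {u. E w u}) < t" using w unfolding bad_def by blast
              ultimately show "T - t + 1 \<le> card {u \<in> S0 j. \<not> E w u}"
                by (rule aux)
            qed
          qed
          also have "\<dots> = (\<Sum>u\<in>S0 j. card {w\<in>W k. \<not> E w u})"
            by (rule dc[OF finK finS0[OF j]])
          also have "\<dots> \<le> (\<Sum>u\<in>S0 j. m)"
          proof (rule sum_mono)
            fix u assume u: "u \<in> S0 j"
            have "{w\<in>W k. \<not> E w u} = {w\<in>W k. \<not> E u w}" using sym by blast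
            then show "card {w\<in>W k. \<not> E w u} \<le> m"
            proof -
              have uW: "u \<in> W j" using S0 j u by blast
              show ?thesis using nonn[OF j lessI uW] `{w\<in>W k. \<not> E w u} = {w\<in>W k. \<not> E u w}` by simp
            qed
          qed
          also have "\<dots> = T * m" using S0 j by simp
          finally have "card (bad j) * (T - t + 1) \<le> T * m" .
          then have "real (card (bad j) * (T - t + 1)) \<le> real (T * m)" by (simp only: of_nat_le_iff)
          moreover have "real (card (bad j)) * D = real (card (bad j) * (T - t + 1))"
            unfolding D_def by (simp only: of_nat_mult)
          ultimately show ?thesis by simp
        qed
        have cover: "card (W k) \<le> card good + (\<Sum>j<k. card (bad j))"
        proof -
          have "W k \<subseteq> good \<union> (\<Union>j<k. bad j)" unfolding good_def by auto
          then have "card (W k) \<le> card (good \<union> (\<Union>j<k. bad j))"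
            by (rule card_mono[rotated]) (auto simp: good_def bad_def finK)
          also have "\<dots> \<le> card good + card (\<Union>j<k. bad j)" by (rule card_Un_le)
          also have "\<dots> \<le> card good + (\<Sum>j<k. card (bad j))" using card_UN_le[of "{..<k}" bad] by simp
          finally show ?thesis .
        qed
        have goodbig: "real (card good) \<ge> \<epsilon> * real n / 2"
        proof -
          have s1: "(\<Sum>j<k. real (card (bad j))) * D \<le> real k * real T * real m"
          proof -
            have "(\<Sum>j<k. real (card (bad j))) * D = (\<Sum>j<k. real (card (bad j)) * D)"
              by (simp add: sum_distrib_right)
            also have "\<dots> \<le> (\<Sum>j<k. real T * real m)" by (intro sum_mono badb) simp
            finally show ?thesis by simp
          qed
          have c2: "real (card (W k)) \<le> real (card good) + (\<Sum>j<k. real (card (bad j)))"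
            using cover by (metis of_nat_add of_nat_le_iff of_nat_sum)
          have c3: "real k * real m + \<epsilon> * real n \<le> real (card (W k))" using sz[of k] by simp
          have c4: "real k * real m * (real t - 1) \<le> real k * real m * real t"
            by (simp add: mult_left_mono)
          have c5: "real k * real m * real t \<le> \<epsilon> / 2 * D * real m"
            using key mult_right_mono[OF key, of "real m"] by (simp add: mult_ac)
          have c6: "\<epsilon> / 2 * D * real m \<le> \<epsilon> / 2 * D * real n"
            using mn eps Dpos by (intro mult_left_mono) auto
          have "(real k * real m + \<epsilon> * real n) * D \<le> real (card good) * D + real k * real T * real m"
            using c2 c3 s1 Dpos
            by (smt (verit, best) distrib_right mult_right_mono)
          then have "\<epsilon> * real n * D - real k * real m * (real t - 1) \<le> real (card good) * D"
            unfolding TD by (simp add: algebra_simps)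
          moreover have "real k * real m * (real t - 1) = real k * real m * real t - real k * real m"
            by (simp add: algebra_simps)
          moreover have "\<epsilon> / 2 * D * real n = (\<epsilon> * real n * D) / 2" by simp
          moreover have "real k * real m \<ge> 0" by simp
          ultimately have "(\<epsilon> * real n * D) / 2 \<le> real (card good) * D"
            using c5 c6 by linarith
          then have "\<epsilon> * real n / 2 * D \<le> real (card good) * D" by simp
          then show ?thesis using Dpos by simp
        qed
        have goodbig2: "card good \<ge> t * 2^(T*k)"
        proof -
          have "real (nat \<lceil>2 * real t * 2^(T*k) / \<epsilon>\<rceil>) \<le> real n" using nN unfolding N_def by simp
          then have "2 * real t * 2^(T*k) / \<epsilon> \<le> real n" by linarith
          then have "2 * real t * 2^(T*k) \<le> real n * \<epsilon>" using eps by (simp add: divide_le_eq)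
          then have "real t * 2^(T*k) \<le> real (card good)" using goodbig by (simp add: mult_ac)
          then have "real (t * 2^(T*k)) \<le> real (card good)" by simp
          then show ?thesis by (simp only: of_nat_le_iff)
        qed
        define f where "f w = restrict (\<lambda>j. SOME A. A \<subseteq> S0 j \<inter> {u. E w u} \<and> card A = t) {..<k}" for w
        have fprop: "f w j \<subseteq> S0 j \<inter> {u. E w u} \<and> card (f w j) = t" if w: "w \<in> good" and j: "j < k" for w j
        proof -
          have "w \<notin> bad j" using w j unfolding good_def by auto
          then have "t \<le> card (S0 j \<inter> {u. E w u})" using w unfolding good_def bad_def by auto
          then obtain A where "A \<subseteq> S0 j \<inter> {u. E w u}" "card A = t"
            by (meson obtain_subset_with_card_n)
          then have "\<exists>A. A \<subseteq> S0 j \<inter> {u. E w u} \<and> card A = t" by blast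
          from someI_ex[OF this] show ?thesis using j unfolding f_def by simp
        qed
        define B where "B = PiE {..<k} (\<lambda>j. Pow (S0 j))"
        have fB: "f \<in> good \<rightarrow> B" unfolding B_def using fprop by (auto simp: f_def)
        have finB: "finite B" unfolding B_def using finS0 by (intro finite_PiE) auto
        have neB: "B \<noteq> {}" unfolding B_def by (auto simp: PiE_eq_empty_iff)
        have cardB: "card B = 2^(T*k)"
        proof -
          have "card B = (\<Prod>j<k. card (Pow (S0 j)))" unfolding B_def by (simp add: card_PiE)
          also have "\<dots> = (\<Prod>j<k. 2^T)" using finS0 S0 by (intro prod.cong) (auto simp: card_Pow)
          also have "\<dots> = 2^(T*k)" by (simp add: power_mult)
          finally show ?thesis .
        qed
        have fingood: "finite good" unfolding good_def using finK by simp
        obtain y where y: "y \<in> B" and yc: "card (f -` {y} \<inter> good) * card B \<ge> card good"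
          using pigeonhole_card[OF fB fingood finB neB] by blast
        have "card (f -` {y} \<inter> good) \<ge> t"
        proof -
          have "t * card B \<le> card (f -` {y} \<inter> good) * card B" using yc goodbig2 cardB by (metis le_trans)
          then show ?thesis using finB neB by (simp add: card_gt_0_iff)
        qed
        then obtain S' where S': "S' \<subseteq> f -` {y} \<inter> good" "card S' = t"
          by (meson obtain_subset_with_card_n)
        then obtain w0 where w0: "w0 \<in> S'" using t1 by (metis card.empty ex_in_conv not_one_le_zero)
        have w0f: "f w0 = y" "w0 \<in> good" using w0 S' by auto
        define S where "S j = (if j = k then S' else y j)" for j
        show "\<exists>S. \<forall>j<Suc k. S j \<subseteq> W j \<and> card (S j) = t \<and> (\<forall>i<j. \<forall>x\<in>S i. \<forall>y\<in>S j. E x y)"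
        proof (rule exI[of _ S], intro allI impI conjI)
          fix j assume j: "j < Suc k"
          show "S j \<subseteq> W j"
          proof (cases "j = k")
            case True then show ?thesis using S' unfolding S_def good_def by auto
          next
            case False then have jk: "j < k" using j by simp
            then have "S0 j \<subseteq> W j" using S0 by blast
            then show ?thesis using fprop[OF w0f(2) jk] w0f False unfolding S_def by auto
          qed
          show "card (S j) = t"
          proof (cases "j = k")
            case True then show ?thesis using S' unfolding S_def by auto
          next
            case False then have jk: "j < k" using j by simp
            then show ?thesis using fprop[OF w0f(2) jk] w0f False unfolding S_def by auto
          qed
          show "\<forall>x\<in>S i. \<forall>y\<in>S j. E x y" if i: "i < j" for i
          proof (intro ballI)
            fix x z assume x: "x \<in> S i" and z: "z \<in> S j"
            have ik: "i < k" using i j by simp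
            have xS: "x \<in> f w0 i" using x ik w0f unfolding S_def by auto
            show "E x z"
            proof (cases "j = k")
              case True
              then have zz: "z \<in> S'" using z unfolding S_def by simp
              then have "f z = y" "z \<in> good" using S' by auto
              then have "x \<in> S0 i \<inter> {u. E z u}" using fprop[of z i] xS w0f ik by auto
              then show ?thesis using sym by auto
            next
              case False then have jk: "j < k" using j by simp
              have "z \<in> S0 j" using z fprop[OF w0f(2) jk] w0f unfolding S_def using False by auto
              moreover have "x \<in> S0 i" using xS fprop[OF w0f(2) ik] by auto
              ultimately show ?thesis using S0 jk i by blast
            qed
          qed
        qed
      qed
    qed
  qed
qed


definition sw :: "nat \<Rightarrow> nat \<Rightarrow> nat \<Rightarrow> nat" where
  "sw a b x = (if x = a then b else if x = b then a else x)"

lemma sw_inv[simp]: "sw a b (sw a b x) = x" unfolding sw_def by auto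
lemma sw_inj: "sw a b x = sw a b y \<Longrightarrow> x = y" by (metis sw_inv)
lemma sw_lt: "a < r \<Longrightarrow> b < r \<Longrightarrow> x < r \<Longrightarrow> sw a b x < r" unfolding sw_def by auto
lemma sw_a[simp]: "sw a b a = b" unfolding sw_def by auto

lemma ds_le:
  assumes B: "balanced_r_partite r n VG EG P" and "i<r" "j<r" "i\<noteq>j" "u\<in>P i"
  shows "delta_star r EG P \<le> card {w\<in>P j. EG u w}"
proof -
  let ?A = "{card {u\<in>P j. EG v u} | i j v. i < r \<and> j < r \<and> i \<noteq> j \<and> v \<in> P i}"
  have finV: "finite VG" using B unfolding balanced_r_partite_def simple_graph_def by blast
  have "?A \<subseteq> {..n}"
  proof
    fix x assume "x \<in> ?A"
    then obtain i' j' v' where x: "x = card {u\<in>P j'. EG v' u}" "j' < r" by blast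
    have "P j' \<subseteq> VG" "card (P j') = n" using B x(2) unfolding balanced_r_partite_def by auto
    then have "card {u\<in>P j'. EG v' u} \<le> n" using finV by (metis (no_types, lifting) card_mono finite_subset mem_Collect_eq subsetI)
    then show "x \<in> {..n}" using x by simp
  qed
  then have "finite ?A" using finite_subset by blast
  moreover have "card {w\<in>P j. EG u w} \<in> ?A" using assms by blast
  ultimately show ?thesis unfolding delta_star_def by (rule Min_le)
qed

theorem proposition2p6:
  fixes VH :: "'a set" and EH :: "'a \<Rightarrow> 'a \<Rightarrow> bool" and r :: nat
  assumes "simple_graph VH EH"
    and "chromatic_number VH EH = r" and "r \<ge> 3"
    and "graph_gcd VH EH = 1"
  shows "\<forall>\<alpha>::real. \<alpha> > 0 \<longrightarrow> (\<exists>n0::nat. \<forall>n \<ge> n0. \<forall>(VG::nat set) EG P.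
           balanced_r_partite r n VG EG P \<and>
           real (delta_star r EG P) \<ge> (real r - 2) / (real r - 1) * real n + \<alpha> * real n
           \<longrightarrow> (\<forall>v\<in>VG. copy_containing VH EH VG EG v))"
proof (intro allI impI)
  fix \<alpha> :: real assume apos: "\<alpha> > 0"
  have finH: "finite VH" and symH: "\<And>x y. EH x y \<Longrightarrow> x \<in> VH \<and> y \<in> VH \<and> x \<noteq> y"
    using assms(1) unfolding simple_graph_def by auto
  have exc: "\<exists>k f. proper_colouring VH EH k f"
  proof -
    obtain g where g: "bij_betw g VH {0..<card VH}" using ex_bij_betw_finite_nat[OF finH] by blast
    have "proper_colouring VH EH (card VH) g"
      unfolding proper_colouring_def using g symH
      by (auto simp: bij_betw_def inj_on_def image_subset_iff) 
    then show ?thesis by blast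
  qed
  obtain f where f: "proper_colouring VH EH r f"
    using LeastI_ex[OF exc] assms(2) unfolding chromatic_number_def by blast
  have neH: "VH \<noteq> {}"
  proof
    assume "VH = {}"
    then have "proper_colouring VH EH 0 f" unfolding proper_colouring_def by simp
    then have "chromatic_number VH EH \<le> 0" unfolding chromatic_number_def
      using Least_le[of "\<lambda>k. \<exists>f. proper_colouring VH EH k f" 0] by blast
    then show False using assms(2,3) by simp
  qed
  then obtain x0 where x0: "x0 \<in> VH" by blast
  define c0 where "c0 = f x0"
  have c0r: "c0 < r" using f x0 unfolding proper_colouring_def c0_def by blast
  define t where "t = card VH"
  have ha2: "0 < \<alpha>/2" using apos by simp
  obtain N0 where N0: "\<forall>n\<ge>N0. \<forall>(E::nat\<Rightarrow>nat\<Rightarrow>bool) (W::nat\<Rightarrow>nat set) (m::nat).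
     (\<forall>x y. E x y \<longrightarrow> E y x) \<and> (\<forall>j<r. finite (W j)) \<and> m \<le> n \<and>
     (\<forall>i j. i < j \<and> j < r \<longrightarrow> (\<forall>u\<in>W i. card {w\<in>W j. \<not> E u w} \<le> m)) \<and>
     (\<forall>j<r. real j * real m + \<alpha>/2 * real n \<le> real (card (W j)))
     \<longrightarrow> (\<exists>S. \<forall>j<r. S j \<subseteq> W j \<and> card (S j) = t \<and> (\<forall>i<j. \<forall>x\<in>S i. \<forall>y\<in>S j. E x y))"
    using blowup[where 'b=nat, of r, rule_format, OF ha2, of t] by (elim exE) (rule that)
  show "\<exists>n0::nat. \<forall>n \<ge> n0. \<forall>(VG::nat set) EG P.
           balanced_r_partite r n VG EG P \<and>
           real (delta_star r EG P) \<ge> (real r - 2) / (real r - 1) * real n + \<alpha> * real n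
           \<longrightarrow> (\<forall>v\<in>VG. copy_containing VH EH VG EG v)"
  proof (rule exI[of _ "max N0 (nat \<lceil>1/\<alpha>\<rceil> + 1)"], intro allI impI ballI)
    fix n :: nat and VG :: "nat set" and EG P v
    assume nN: "max N0 (nat \<lceil>1/\<alpha>\<rceil> + 1) \<le> n"
    assume HG: "balanced_r_partite r n VG EG P \<and>
           real (delta_star r EG P) \<ge> (real r - 2) / (real r - 1) * real n + \<alpha> * real n"
    assume vV: "v \<in> VG"
    have B: "balanced_r_partite r n VG EG P" using HG by blast
    have dsb: "real (delta_star r EG P) \<ge> (real r - 2) / (real r - 1) * real n + \<alpha> * real n"
      using HG by blast
    have simpG: "simple_graph VG EG" using B unfolding balanced_r_partite_def by blast
    have finG: "finite VG" and symG: "\<And>x y. EG x y \<Longrightarrow> EG y x"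
      using simpG unfolding simple_graph_def by auto
    have Psub: "\<And>i. i < r \<Longrightarrow> P i \<subseteq> VG" and Pcard: "\<And>i. i < r \<Longrightarrow> card (P i) = n"
      and Pdisj: "\<And>i j. i < r \<Longrightarrow> j < r \<Longrightarrow> i \<noteq> j \<Longrightarrow> P i \<inter> P j = {}"
      and VGU: "VG = (\<Union>i<r. P i)"
      using B unfolding balanced_r_partite_def by auto
    have Pfin: "\<And>i. i < r \<Longrightarrow> finite (P i)" using Psub finG finite_subset by blast
    obtain i0 where i0: "i0 < r" "v \<in> P i0" using vV VGU by blast
    have nN0: "n \<ge> N0" using nN by simp
    have n1: "real n \<ge> 1 / \<alpha>" using nN by linarith
    define ds where "ds = delta_star r EG P"
    define m where "m = n - ds"
    have nonnb: "card {w\<in>P j. \<not> EG u w} \<le> m" if "i < r" "j < r" "i \<noteq> j" "u \<in> P i" for i j u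
    proof -
      have "card (P j) = card {w\<in>P j. EG u w} + card {w\<in>P j. \<not> EG u w}"
        using Pfin[OF that(2)] by (subst card_Un_disjoint[symmetric]) (auto intro: arg_cong[where f=card])
      moreover have "ds \<le> card {w\<in>P j. EG u w}" unfolding ds_def by (rule ds_le[OF B that])
      ultimately show ?thesis unfolding m_def using Pcard[OF that(2)] by linarith
    qed
    define j1 where "j1 = (if i0 = 0 then 1 else 0::nat)"
    have j1: "j1 < r" "j1 \<noteq> i0" unfolding j1_def using assms(3) by auto
    have dsn: "ds \<le> n"
    proof -
      have "ds \<le> card {w\<in>P j1. EG v w}" unfolding ds_def by (rule ds_le[OF B i0(1) j1(1) j1(2)[symmetric] i0(2)])
      also have "\<dots> \<le> card (P j1)" using Pfin[OF j1(1)] by (intro card_mono) auto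
      finally show ?thesis using Pcard[OF j1(1)] by simp
    qed
    have mreal: "real m = real n - real ds" unfolding m_def using dsn by simp
    have r1: "real r - 1 > 0" using assms(3) by simp
    have "(real r - 1) * real ds \<ge> (real r - 1) * ((real r - 2) / (real r - 1) * real n + \<alpha> * real n)"
      using dsb r1 unfolding ds_def by (intro mult_left_mono) auto
    also have "(real r - 1) * ((real r - 2) / (real r - 1) * real n + \<alpha> * real n) = (real r - 2) * real n + (real r - 1) * (\<alpha> * real n)"
      using r1 by (simp add: field_simps)
    finally have dsr: "(real r - 1) * real ds \<ge> (real r - 2) * real n + (real r - 1) * (\<alpha> * real n)" .
    have an: "\<alpha> * real n \<ge> 0" using apos by simp
    have an1: "\<alpha> * real n \<ge> 1" using n1 apos by (simp add: field_simps)
    have r3: "real r - 1 \<ge> 2" using assms(3) by simp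
    have "(real r - 1) * (\<alpha> * real n) \<ge> 2 * (\<alpha> * real n)" using mult_right_mono[OF r3 an] by simp
    then have mbound: "(real r - 1) * real m \<le> real n - 2 * (\<alpha> * real n)"
      using dsr unfolding mreal by (simp add: algebra_simps)
    define \<rho> where "\<rho> = sw i0 (r - 1)"
    have \<rho>r: "\<And>j. j < r \<Longrightarrow> \<rho> j < r" unfolding \<rho>_def using i0 assms(3) by (intro sw_lt) auto
    have \<rho>last: "\<rho> (r - 1) = i0" unfolding \<rho>_def sw_def by auto
    have \<rho>inj: "\<And>a b. \<rho> a = \<rho> b \<Longrightarrow> a = b" unfolding \<rho>_def by (rule sw_inj)
    define W where "W j = (if j = r - 1 then P i0 - {v} else {u\<in>P (\<rho> j). EG v u})" for j
    have WP: "W j \<subseteq> P (\<rho> j)" for j unfolding W_def using \<rho>last by auto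
    have Wfin: "finite (W j)" if "j < r" for j using WP Pfin \<rho>r that finite_subset by blast
    have vW: "v \<notin> W j" if "j < r" for j
    proof (cases "j = r - 1")
      case True then show ?thesis unfolding W_def by simp
    next
      case False
      then have "\<rho> j \<noteq> i0" using \<rho>last \<rho>inj by metis
      then have "P (\<rho> j) \<inter> P i0 = {}" using Pdisj \<rho>r that i0 by blast
      then show ?thesis using WP i0 by blast
    qed
    have Wdisj: "W a \<inter> W b = {}" if "a < r" "b < r" "a \<noteq> b" for a b
      using WP[of a] WP[of b] Pdisj[of "\<rho> a" "\<rho> b"] \<rho>r that \<rho>inj by blast
    have WN: "W j \<subseteq> {u. EG v u}" if "j \<noteq> r - 1" for j unfolding W_def using that by auto
    have cond: "(\<forall>x y. EG x y \<longrightarrow> EG y x) \<and> (\<forall>j<r. finite (W j)) \<and> m \<le> n \<and>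
     (\<forall>i j. i < j \<and> j < r \<longrightarrow> (\<forall>u\<in>W i. card {w\<in>W j. \<not> EG u w} \<le> m)) \<and>
     (\<forall>j<r. real j * real m + \<alpha>/2 * real n \<le> real (card (W j)))"
    proof (intro conjI allI impI ballI)
      show "EG x y \<Longrightarrow> EG y x" for x y by (rule symG)
      show "j < r \<Longrightarrow> finite (W j)" for j by (rule Wfin)
      show "m \<le> n" unfolding m_def by simp
    next
      fix i j u assume ij: "i < j \<and> j < r" and u: "u \<in> W i"
      have "card {w\<in>W j. \<not> EG u w} \<le> card {w\<in>P (\<rho> j). \<not> EG u w}"
        using WP[of j] Pfin[OF \<rho>r[of j]] ij by (intro card_mono) auto
      also have "\<dots> \<le> m"
        using nonnb[of "\<rho> i" "\<rho> j" u] \<rho>r ij u WP[of i] \<rho>inj by force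
      finally show "card {w\<in>W j. \<not> EG u w} \<le> m" .
    next
      fix j assume j: "j < r"
      have jm: "real j * real m \<le> (real r - 1) * real m"
        using j by (intro mult_right_mono) auto
      show "real j * real m + \<alpha>/2 * real n \<le> real (card (W j))"
      proof (cases "j = r - 1")
        case True
        have "card (W j) = n - 1" unfolding W_def using True Pcard i0 Pfin by simp
        moreover have "n \<ge> 1" using nN by simp
        ultimately have "real (card (W j)) = real n - 1" by simp
        then show ?thesis using True mbound an1 assms(3) by (simp add: of_nat_diff)
      next
        case False
        have jr: "j \<le> r - 2" using j False by simp
        have jm2: "real j * real m \<le> (real r - 2) * real m"
          using jr assms(3) by (intro mult_right_mono) auto
        have "\<rho> j \<noteq> i0" using False \<rho>last \<rho>inj by metis
        then have "ds \<le> card {w\<in>P (\<rho> j). EG v w}" unfolding ds_def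
          using ds_le[OF B i0(1) \<rho>r[OF j] _ i0(2)] by metis
        then have "real ds \<le> real (card (W j))" unfolding W_def using False by simp
        moreover have "(real r - 2) * real m + real m = (real r - 1) * real m" by (simp add: algebra_simps)
        ultimately show ?thesis using jm2 mbound an mreal by linarith
      qed
    qed
    obtain S where S: "\<forall>j<r. S j \<subseteq> W j \<and> card (S j) = t \<and> (\<forall>i<j. \<forall>x\<in>S i. \<forall>y\<in>S j. EG x y)"
      using N0[rule_format, OF nN0 cond] by blast
    have Scomp: "EG x y" if "a < r" "b < r" "a \<noteq> b" "x \<in> S a" "y \<in> S b" for a b x y
    proof (cases "a < b")
      case True then show ?thesis using S that by blast
    next
      case False then have "b < a" using that by simp
      then show ?thesis using S that symG by blast
    qed
    define \<tau> where "\<tau> = sw c0 (r - 1)"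
    have \<tau>r: "\<And>c. c < r \<Longrightarrow> \<tau> c < r" unfolding \<tau>_def using c0r assms(3) by (intro sw_lt) auto
    have \<tau>c0: "\<tau> c0 = r - 1" unfolding \<tau>_def by simp
    have \<tau>inj: "\<And>a b. \<tau> a = \<tau> b \<Longrightarrow> a = b" unfolding \<tau>_def by (rule sw_inj)
    have fr: "\<And>x. x \<in> VH \<Longrightarrow> f x < r" using f unfolding proper_colouring_def by blast
    have fprop: "\<And>x y. x \<in> VH \<Longrightarrow> y \<in> VH \<Longrightarrow> EH x y \<Longrightarrow> f x \<noteq> f y"
      using f unfolding proper_colouring_def by blast
    have "\<forall>c\<in>{..<r}. \<exists>g. g ` ({x\<in>VH. f x = c} - {x0}) \<subseteq> S (\<tau> c) \<and> inj_on g ({x\<in>VH. f x = c} - {x0})"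
    proof
      fix c assume c: "c \<in> {..<r}"
      have tc: "\<tau> c < r" using \<tau>r c by simp
      have Sc: "S (\<tau> c) \<subseteq> W (\<tau> c)" "card (S (\<tau> c)) = t" using S tc by blast+
      have finS: "finite (S (\<tau> c))" using Sc(1) Wfin[OF tc] finite_subset by blast
      have finA: "finite ({x\<in>VH. f x = c} - {x0})" using finH by simp
      have "card ({x\<in>VH. f x = c} - {x0}) \<le> card VH" using finH by (intro card_mono) auto
      also have "\<dots> = card (S (\<tau> c))" using Sc(2) unfolding t_def by simp
      finally show "\<exists>g. g ` ({x\<in>VH. f x = c} - {x0}) \<subseteq> S (\<tau> c) \<and> inj_on g ({x\<in>VH. f x = c} - {x0})"
        using card_le_inj[OF finA finS] by blast
    qed
    then have "\<exists>G. \<forall>c\<in>{..<r}. G c ` ({x\<in>VH. f x = c} - {x0}) \<subseteq> S (\<tau> c) \<and> inj_on (G c) ({x\<in>VH. f x = c} - {x0})"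
      by (rule bchoice)
    then obtain G where G: "\<forall>c\<in>{..<r}. G c ` ({x\<in>VH. f x = c} - {x0}) \<subseteq> S (\<tau> c) \<and> inj_on (G c) ({x\<in>VH. f x = c} - {x0})"
      ..
    define \<phi> where "\<phi> x = (if x = x0 then v else G (f x) x)" for x
    have \<phi>S: "\<phi> x \<in> S (\<tau> (f x))" if "x \<in> VH" "x \<noteq> x0" for x
      using G fr[OF that(1)] that unfolding \<phi>_def by auto
    have \<tau>ne: "\<tau> (f x) \<noteq> r - 1" if "x \<in> VH" "f x \<noteq> c0" for x
      using \<tau>c0 \<tau>inj that by metis
    have SW: "S j \<subseteq> W j" if "j < r" for j using S that by blast
    show "copy_containing VH EH VG EG v"
      unfolding copy_containing_def
    proof (rule exI[of _ \<phi>], intro conjI)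
      show "inj_on \<phi> VH"
      proof (rule inj_onI)
        fix x y assume x: "x \<in> VH" and y: "y \<in> VH" and e: "\<phi> x = \<phi> y"
        show "x = y"
        proof (cases "x = x0"; cases "y = x0")
          assume "x = x0" "y \<noteq> x0"
          then have "v \<in> S (\<tau> (f y))" using \<phi>S[OF y] e unfolding \<phi>_def by auto
          then show ?thesis using vW[OF \<tau>r[OF fr[OF y]]] SW[OF \<tau>r[OF fr[OF y]]] by blast
        next
          assume "x \<noteq> x0" "y = x0"
          then have "v \<in> S (\<tau> (f x))" using \<phi>S[OF x] e unfolding \<phi>_def by auto
          then show ?thesis using vW[OF \<tau>r[OF fr[OF x]]] SW[OF \<tau>r[OF fr[OF x]]] by blast
        next
          assume "x = x0" "y = x0" then show ?thesis by simp
        next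
          assume xn: "x \<noteq> x0" and yn: "y \<noteq> x0"
          show ?thesis
          proof (cases "f x = f y")
            case True
            have "inj_on (G (f x)) ({z\<in>VH. f z = f x} - {x0})" using G fr[OF x] by blast
            moreover have "G (f x) x = G (f x) y" using e xn yn True unfolding \<phi>_def by simp
            ultimately show ?thesis using x y xn yn True by (auto dest: inj_onD)
          next
            case False
            have "\<tau> (f x) \<noteq> \<tau> (f y)" using False \<tau>inj by metis
            then have "W (\<tau> (f x)) \<inter> W (\<tau> (f y)) = {}" using Wdisj \<tau>r fr x y by blast
            moreover have "\<phi> x \<in> W (\<tau> (f x))" "\<phi> y \<in> W (\<tau> (f y))"
              using \<phi>S[OF x xn] \<phi>S[OF y yn] SW \<tau>r fr x y by blast+
            ultimately show ?thesis using e by auto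
          qed
        qed
      qed
      show "\<phi> ` VH \<subseteq> VG"
      proof
        fix z assume "z \<in> \<phi> ` VH"
        then obtain x where x: "x \<in> VH" "z = \<phi> x" by blast
        show "z \<in> VG"
        proof (cases "x = x0")
          case True then show ?thesis using x vV unfolding \<phi>_def by simp
        next
          case False
          then have "z \<in> P (\<rho> (\<tau> (f x)))" using \<phi>S[OF x(1) False] SW[OF \<tau>r[OF fr[OF x(1)]]] WP x by blast
          then show ?thesis using Psub \<rho>r \<tau>r fr x by blast
        qed
      qed
      show "\<forall>x\<in>VH. \<forall>y\<in>VH. EH x y \<longrightarrow> EG (\<phi> x) (\<phi> y)"
      proof (intro ballI impI)
        fix x y assume x: "x \<in> VH" and y: "y \<in> VH" and e: "EH x y"
        have xy: "x \<noteq> y" using symH e by blast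
        have fxy: "f x \<noteq> f y" using fprop x y e by blast
        show "EG (\<phi> x) (\<phi> y)"
        proof (cases "x = x0")
          case True
          then have yn: "y \<noteq> x0" using xy by simp
          have "f y \<noteq> c0" using fxy True unfolding c0_def by simp
          then have "\<tau> (f y) \<noteq> r - 1" using \<tau>ne y by blast
          then have "\<phi> y \<in> {u. EG v u}" using \<phi>S[OF y yn] SW[OF \<tau>r[OF fr[OF y]]] WN by blast
          then show ?thesis using True unfolding \<phi>_def by simp
        next
          case xn: False
          show ?thesis
          proof (cases "y = x0")
            case True
            have "f x \<noteq> c0" using fxy True unfolding c0_def by simp
            then have "\<tau> (f x) \<noteq> r - 1" using \<tau>ne x by blast
            then have "\<phi> x \<in> {u. EG v u}" using \<phi>S[OF x xn] SW[OF \<tau>r[OF fr[OF x]]] WN by blast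
            then show ?thesis using True symG unfolding \<phi>_def by simp
          next
            case yn: False
            have "\<tau> (f x) \<noteq> \<tau> (f y)" using fxy \<tau>inj by metis
            then show ?thesis using Scomp[OF \<tau>r[OF fr[OF x]] \<tau>r[OF fr[OF y]] _ \<phi>S[OF x xn] \<phi>S[OF y yn]] by blast
          qed
        qed
      qed
      show "v \<in> \<phi> ` VH" using x0 unfolding \<phi>_def by force
    qed
  qed
qed

end
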